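(* Let $H$ be a hypergraph on $V=[n]$. Then $H$ is $r$-cross-free if and only if $\mathrm{cl}_r(H)$ is $r$-cross-free.
   Context: Hypergraphs on $V$ are identified with their hyperedge sets. $\mathcal K_r(n)$ is the class of hypergraphs $\mathcal E$ on $V$ satisfying: (R0) every $X\subseteq V$ with $|X|\le r$ is in $\mathcal E$; (R1) $A\in\mathcal E\Rightarrow V\setminus A\in\mathcal E$; (R2) $A,B\in\mathcal E$ and $|A\cap B|\ge r\Rightarrow A\cup B\in\mathcal E$. $\mathcal K^0_r(n)$ is the class satisfying (R0) and (R1) only. $\mathrm{cl}_r(H)$ (resp. $\mathrm{cl}^0_r(H)$) is the intersection of all hypergraphs in $\mathcal K_r(n)$ (resp. $\mathcal K^0_r(n)$) containing $H$. $A,B\subseteq V$ are $r$-orthogonal if $\mathrm{cl}_r(\{A,B\})=\mathrm{cl}^0_r(\{A,B\})$. $H$ is $r$-cross-free if every pair of its hyperedges is $r$-orthogonal. *)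

theory Defs
  imports Main
begin

definition ground :: "nat \<Rightarrow> nat set" where
  "ground n = {1..n}"

definition hypergraph_on :: "nat \<Rightarrow> nat set set \<Rightarrow> bool" where
  "hypergraph_on n H \<longleftrightarrow> H \<subseteq> Pow (ground n)"

definition K0 :: "nat \<Rightarrow> nat \<Rightarrow> nat set set set" where
  "K0 r n = {E. hypergraph_on n E
      \<and> (\<forall>X. X \<subseteq> ground n \<and> card X \<le> r \<longrightarrow> X \<in> E)
      \<and> (\<forall>A\<in>E. ground n - A \<in> E)}"

definition K :: "nat \<Rightarrow> nat \<Rightarrow> nat set set set" where
  "K r n = {E. E \<in> K0 r n
      \<and> (\<forall>A\<in>E. \<forall>B\<in>E. card (A \<inter> B) \<ge> r \<longrightarrow> A \<union> B \<in> E)}"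

definition cl :: "nat \<Rightarrow> nat \<Rightarrow> nat set set \<Rightarrow> nat set set" where
  "cl r n H = \<Inter> {E \<in> K r n. H \<subseteq> E}"

definition cl0 :: "nat \<Rightarrow> nat \<Rightarrow> nat set set \<Rightarrow> nat set set" where
  "cl0 r n H = \<Inter> {E \<in> K0 r n. H \<subseteq> E}"

definition orthogonal :: "nat \<Rightarrow> nat \<Rightarrow> nat set \<Rightarrow> nat set \<Rightarrow> bool" where
  "orthogonal r n A B \<longleftrightarrow> cl r n {A, B} = cl0 r n {A, B}"

definition cross_free :: "nat \<Rightarrow> nat \<Rightarrow> nat set set \<Rightarrow> bool" where
  "cross_free r n H \<longleftrightarrow> (\<forall>A\<in>H. \<forall>B\<in>H. orthogonal r n A B)"

end

theory Submission
  imports Defs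
begin

definition closedR2 :: "nat \<Rightarrow> nat set set \<Rightarrow> bool" where
  "closedR2 r S \<longleftrightarrow> (\<forall>A\<in>S. \<forall>B\<in>S. r \<le> card (A \<inter> B) \<longrightarrow> A \<union> B \<in> S)"

definition Core :: "nat \<Rightarrow> nat \<Rightarrow> nat set set" where
  "Core n r = {X. X \<subseteq> ground n \<and> (card X \<le> r \<or> card (ground n - X) \<le> r)}"

definition TT :: "nat \<Rightarrow> nat \<Rightarrow> nat set set \<Rightarrow> nat set set" where
  "TT n r G = G \<union> (\<lambda>A. ground n - A) ` G \<union> Core n r"

lemma fin_ground[simp]: "finite (ground n)" by (simp add: ground_def)

lemma K_iff: "E \<in> K r n \<longleftrightarrow> E \<in> K0 r n \<and> closedR2 r E"
  by (auto simp: K_def closedR2_def)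

lemma dcompl: "A \<subseteq> ground n \<Longrightarrow> ground n - (ground n - A) = A" by auto

lemma TT_K0:
  assumes "G \<subseteq> Pow (ground n)"
  shows "TT n r G \<in> K0 r n"
proof -
  have "hypergraph_on n (TT n r G)" using assms
    by (auto simp: hypergraph_on_def TT_def Core_def)
  moreover have "\<forall>X. X \<subseteq> ground n \<and> card X \<le> r \<longrightarrow> X \<in> TT n r G"
    by (auto simp: TT_def Core_def)
  moreover have "\<forall>A\<in>TT n r G. ground n - A \<in> TT n r G"
  proof
    fix A assume A: "A \<in> TT n r G"
    show "ground n - A \<in> TT n r G"
    proof (cases "A \<in> G")
      case True then show ?thesis by (auto simp: TT_def)
    next
      case False
      show ?thesis
      proof (cases "A \<in> Core n r")
        case True
        then have "A \<subseteq> ground n" by (auto simp: Core_def)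
        with True have "ground n - A \<in> Core n r" by (auto simp: Core_def dcompl)
        then show ?thesis by (auto simp: TT_def)
      next
        case F2: False
        with A False obtain B where B: "B \<in> G" "A = ground n - B" by (auto simp: TT_def)
        then have "ground n - A = B" using assms by auto
        then show ?thesis using B by (auto simp: TT_def)
      qed
    qed
  qed
  ultimately show ?thesis by (simp add: K0_def)
qed

lemma TT_sub_K0:
  assumes "E \<in> K0 r n" "G \<subseteq> E"
  shows "TT n r G \<subseteq> E"
proof
  fix X assume X: "X \<in> TT n r G"
  have R0: "\<And>X. X \<subseteq> ground n \<Longrightarrow> card X \<le> r \<Longrightarrow> X \<in> E"
   and R1: "\<And>A. A \<in> E \<Longrightarrow> ground n - A \<in> E"
    using assms(1) by (auto simp: K0_def)
  show "X \<in> E"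
  proof (cases "X \<in> Core n r")
    case True
    then have sub: "X \<subseteq> ground n" and c: "card X \<le> r \<or> card (ground n - X) \<le> r"
      by (auto simp: Core_def)
    show ?thesis
    proof (cases "card X \<le> r")
      case True then show ?thesis using R0 sub by auto
    next
      case False
      with c have "ground n - X \<in> E" using R0 by auto
      from R1[OF this] show ?thesis using dcompl[OF sub] by simp
    qed
  next
    case False
    then show ?thesis using X assms(2) R1 by (auto simp: TT_def)
  qed
qed

lemma cl0_eq:
  assumes "G \<subseteq> Pow (ground n)"
  shows "cl0 r n G = TT n r G"
proof
  show "cl0 r n G \<subseteq> TT n r G" unfolding cl0_def
    using TT_K0[OF assms, of r] by (auto simp: TT_def)
  show "TT n r G \<subseteq> cl0 r n G" unfolding cl0_def
    using TT_sub_K0 by blast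
qed

lemma Pow_K: "Pow (ground n) \<in> K r n"
  by (auto simp: K_def K0_def hypergraph_on_def)

lemma cl_K:
  assumes "G \<subseteq> Pow (ground n)"
  shows "cl r n G \<in> K r n"
proof -
  let ?F = "{E \<in> K r n. G \<subseteq> E}"
  have ne: "Pow (ground n) \<in> ?F" using Pow_K assms by auto
  have "hypergraph_on n (\<Inter>?F)" using ne by (auto simp: hypergraph_on_def)
  moreover have "\<forall>X. X \<subseteq> ground n \<and> card X \<le> r \<longrightarrow> X \<in> \<Inter>?F"
    by (auto simp: K_def K0_def)
  moreover have "\<forall>A\<in>\<Inter>?F. ground n - A \<in> \<Inter>?F"
    by (auto simp: K_def K0_def)
  moreover have "\<forall>A\<in>\<Inter>?F. \<forall>B\<in>\<Inter>?F. card (A \<inter> B) \<ge> r \<longrightarrow> A \<union> B \<in> \<Inter>?F"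
    by (auto simp: K_def K0_def)
  ultimately show ?thesis by (simp add: K_def K0_def cl_def)
qed

lemma cl0_sub_cl: "cl0 r n G \<subseteq> cl r n G"
  unfolding cl0_def cl_def K_def by blast

lemma cl_eq:
  assumes "G \<subseteq> Pow (ground n)" "closedR2 r (TT n r G)"
  shows "cl r n G = TT n r G"
proof
  have "TT n r G \<in> K r n" using TT_K0[OF assms(1)] assms(2) K_iff by blast
  then show "cl r n G \<subseteq> TT n r G" unfolding cl_def by (auto simp: TT_def)
  show "TT n r G \<subseteq> cl r n G" using cl0_sub_cl cl0_eq[OF assms(1)] by blast
qed

lemma orth_iff:
  assumes "A \<subseteq> ground n" "B \<subseteq> ground n"
  shows "orthogonal r n A B \<longleftrightarrow> closedR2 r (TT n r {A, B})"
proof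
  have G: "{A,B} \<subseteq> Pow (ground n)" using assms by auto
  assume "orthogonal r n A B"
  then have "cl r n {A,B} = TT n r {A,B}" using cl0_eq[OF G] by (simp add: orthogonal_def)
  then show "closedR2 r (TT n r {A, B})" using cl_K[OF G] K_iff by metis
next
  have G: "{A,B} \<subseteq> Pow (ground n)" using assms by auto
  assume "closedR2 r (TT n r {A, B})"
  then show "orthogonal r n A B" using cl_eq[OF G] cl0_eq[OF G] by (simp add: orthogonal_def)
qed

lemma L1:
  assumes X: "X \<in> Core n r" and Y: "Y \<subseteq> ground n" and c: "r \<le> card (X \<inter> Y)"
  shows "X \<union> Y = Y \<or> X \<union> Y \<in> Core n r"
proof -
  have sub: "X \<subseteq> ground n" using X by (auto simp: Core_def)
  have fX: "finite X" using finite_subset[OF sub] by simp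
  show ?thesis
  proof (cases "card X \<le> r")
    case True
    then have "card X \<le> card (X \<inter> Y)" using c by auto
    then have "X \<inter> Y = X" using fX by (metis card_seteq inf_le1)
    then show ?thesis by auto
  next
    case False
    then have "card (ground n - X) \<le> r" using X by (auto simp: Core_def)
    moreover have "card (ground n - (X \<union> Y)) \<le> card (ground n - X)"
      by (rule card_mono) auto
    ultimately show ?thesis using sub Y by (auto simp: Core_def)
  qed
qed

lemma closed_from_pairs:
  assumes G: "G \<subseteq> Pow (ground n)"
    and H: "\<And>U W. U \<in> TT n r G - Core n r \<Longrightarrow> W \<in> TT n r G - Core n r \<Longrightarrow>
              r \<le> card (U \<inter> W) \<Longrightarrow> U \<union> W \<in> TT n r G"
  shows "closedR2 r (TT n r G)"
  unfolding closedR2_def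
proof (intro ballI impI)
  fix U W assume U: "U \<in> TT n r G" and W: "W \<in> TT n r G" and c: "r \<le> card (U \<inter> W)"
  have sU: "U \<subseteq> ground n" and sW: "W \<subseteq> ground n"
    using U W G by (auto simp: TT_def Core_def)
  show "U \<union> W \<in> TT n r G"
  proof (cases "U \<in> Core n r")
    case True
    from L1[OF True sW c] show ?thesis using W by (auto simp: TT_def)
  next
    case F1: False
    show ?thesis
    proof (cases "W \<in> Core n r")
      case True
      have "r \<le> card (W \<inter> U)" using c by (simp add: Int_commute)
      from L1[OF True sU this] show ?thesis using U by (auto simp: TT_def Un_commute)
    next
      case False
      then show ?thesis using H F1 U W c by blast
    qed
  qed
qed

lemma nonCore_rep:
  assumes "U \<in> TT n r G - Core n r"
  shows "\<exists>A\<in>G. U = A \<or> U = ground n - A"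
  using assms by (auto simp: TT_def)

lemma TT_mono: "G \<subseteq> G' \<Longrightarrow> TT n r G \<subseteq> TT n r G'"
  by (auto simp: TT_def)

lemma pair_union:
  assumes orth: "closedR2 r (TT n r {A, B})"
    and "U = A \<or> U = ground n - A" and "W = B \<or> W = ground n - B"
    and c: "r \<le> card (U \<inter> W)"
  shows "U \<union> W \<in> TT n r {A, B}"
proof -
  have "U \<in> TT n r {A,B}" "W \<in> TT n r {A,B}" using assms(2,3) by (auto simp: TT_def)
  then show ?thesis using orth c by (auto simp: closedR2_def)
qed

lemma rep4:
  assumes sA: "A \<subseteq> ground n" and sX: "X \<subseteq> ground n" and sY: "Y \<subseteq> ground n"
    and U: "U = A \<or> U = ground n - A" and UX: "U \<in> {X, Y, ground n - X, ground n - Y}"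
  shows "A \<in> {X, Y, ground n - X, ground n - Y}"
proof (cases "U = A")
  case True then show ?thesis using UX by simp
next
  case False
  then have AU: "A = ground n - U" using U dcompl[OF sA] by auto
  consider "U = X" | "U = Y" | "U = ground n - X" | "U = ground n - Y" using UX by blast
  then show ?thesis using AU by cases (simp_all add: dcompl[OF sX] dcompl[OF sY])
qed

lemma TT_sub4:
  assumes sX: "X \<subseteq> ground n" and sY: "Y \<subseteq> ground n"
    and A: "A \<in> {X, Y, ground n - X, ground n - Y}" and B: "B \<in> {X, Y, ground n - X, ground n - Y}"
  shows "TT n r {A, B} \<subseteq> TT n r {X, Y}"
proof -
  have m: "\<And>Z. Z \<in> {X, Y, ground n - X, ground n - Y} \<Longrightarrow> Z \<in> TT n r {X,Y} \<and> ground n - Z \<in> TT n r {X,Y}"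
  proof -
    fix Z assume "Z \<in> {X, Y, ground n - X, ground n - Y}"
    then consider "Z = X" | "Z = Y" | "Z = ground n - X" | "Z = ground n - Y" by blast
    then show "Z \<in> TT n r {X,Y} \<and> ground n - Z \<in> TT n r {X,Y}"
      by cases (simp_all add: TT_def dcompl[OF sX] dcompl[OF sY])
  qed
  show ?thesis unfolding TT_def[of n r "{A,B}"] using m[OF A] m[OF B]
    by (auto simp: TT_def)
qed

theorem mainTheorem18:
  fixes n r :: nat and H :: "nat set set"
  assumes "hypergraph_on n H"
  shows "cross_free r n H \<longleftrightarrow> cross_free r n (cl r n H)"
proof -
  have HP: "H \<subseteq> Pow (ground n)" using assms by (simp add: hypergraph_on_def)
  have Hcl: "H \<subseteq> cl r n H" unfolding cl_def by blast
  show ?thesis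
  proof
    assume cf: "cross_free r n H"
    have orthH: "\<And>A B. A \<in> H \<Longrightarrow> B \<in> H \<Longrightarrow> closedR2 r (TT n r {A, B})"
    proof -
      fix A B assume "A \<in> H" "B \<in> H"
      then show "closedR2 r (TT n r {A, B})"
        using cf HP orth_iff[of A n B r] by (auto simp: cross_free_def)
    qed
    have clT: "closedR2 r (TT n r H)"
    proof (rule closed_from_pairs[OF HP])
      fix U W assume U: "U \<in> TT n r H - Core n r" and W: "W \<in> TT n r H - Core n r"
        and c: "r \<le> card (U \<inter> W)"
      obtain A where A: "A \<in> H" "U = A \<or> U = ground n - A" using nonCore_rep[OF U] by blast
      obtain B where B: "B \<in> H" "W = B \<or> W = ground n - B" using nonCore_rep[OF W] by blast
      have "U \<union> W \<in> TT n r {A, B}" using pair_union[OF orthH[OF A(1) B(1)] A(2) B(2) c] .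
      moreover have "TT n r {A,B} \<subseteq> TT n r H" using A B by (intro TT_mono) auto
      ultimately show "U \<union> W \<in> TT n r H" by blast
    qed
    have cleq: "cl r n H = TT n r H" using cl_eq[OF HP clT] .
    have TP: "TT n r H \<subseteq> Pow (ground n)" using HP by (auto simp: TT_def Core_def)
    show "cross_free r n (cl r n H)"
      unfolding cross_free_def cleq
    proof (intro ballI)
      fix X Y assume X: "X \<in> TT n r H" and Y: "Y \<in> TT n r H"
      have sX: "X \<subseteq> ground n" and sY: "Y \<subseteq> ground n" using X Y TP by auto
      have cT: "\<And>Z. Z \<in> TT n r H \<Longrightarrow> ground n - Z \<in> TT n r H"
        using TT_K0[OF HP, of r] unfolding K0_def by blast
      have XYP: "{X,Y} \<subseteq> Pow (ground n)" using sX sY by auto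
      have "closedR2 r (TT n r {X, Y})"
      proof (rule closed_from_pairs[OF XYP])
        fix U W assume U: "U \<in> TT n r {X,Y} - Core n r" and W: "W \<in> TT n r {X,Y} - Core n r"
          and c: "r \<le> card (U \<inter> W)"
        have UX: "U \<in> {X, Y, ground n - X, ground n - Y}" using U by (auto simp: TT_def)
        have WX: "W \<in> {X, Y, ground n - X, ground n - Y}" using W by (auto simp: TT_def)
        have "U \<in> TT n r H - Core n r" using UX U X Y cT by auto
        then obtain A where A: "A \<in> H" "U = A \<or> U = ground n - A" using nonCore_rep by blast
        have "W \<in> TT n r H - Core n r" using WX W X Y cT by auto
        then obtain B where B: "B \<in> H" "W = B \<or> W = ground n - B" using nonCore_rep by blast
        have sA: "A \<subseteq> ground n" "B \<subseteq> ground n" using A B HP by auto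
        have "U \<union> W \<in> TT n r {A, B}" using pair_union[OF orthH[OF A(1) B(1)] A(2) B(2) c] .
        moreover have "A \<in> {X, Y, ground n - X, ground n - Y}"
          using rep4[OF sA(1) sX sY A(2) UX] .
        moreover have "B \<in> {X, Y, ground n - X, ground n - Y}"
          using rep4[OF sA(2) sX sY B(2) WX] .
        ultimately show "U \<union> W \<in> TT n r {X, Y}" using TT_sub4[OF sX sY] by blast
      qed
      then show "orthogonal r n X Y" using orth_iff[OF sX sY] by simp
    qed
  next
    assume "cross_free r n (cl r n H)"
    then show "cross_free r n H" using Hcl by (auto simp: cross_free_def)
  qed
qed

end
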